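(* Let $S=\{R_0,\dots,R_d\}$ be a quasi-thin scheme and let $n$ be the number of triples $(u,v,w)\in\{0,\dots,d\}^3$ with $p_{uv}^w\neq 0$. Then $n=(d+1)^2+|\{(a,b):R_a,R_b\in S,\ |R_{a'}R_b|=2\}|$.
   Context: Let $X$ be a nonempty finite set. A scheme of class $d$ on $X$ is a partition $S=\{R_0,\dots,R_d\}$ of $X\times X$ into nonempty sets such that $R_0=\{(b,b):b\in X\}$; for each $c$ there is $c'$ with $R_{c'}=\{(f,e):(e,f)\in R_c\}$; and for all $i,j,k$ the intersection number $p_{ij}^k=|\{\ell\in X:(m,\ell)\in R_i,(\ell,n)\in R_j\}|$ does not depend on $(m,n)\in R_k$. The valency of $R_a$ is $k_a=p_{aa'}^0$; $S$ is quasi-thin if all $k_a\le 2$. The complex product is $R_aR_b=\{R_c\in S:p_{ab}^c>0\}$. *)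

theory Defs
  imports Main
begin

definition inter_count :: "'x set \<Rightarrow> (nat \<Rightarrow> ('x \<times> 'x) set) \<Rightarrow> nat \<Rightarrow> nat \<Rightarrow> 'x \<Rightarrow> 'x \<Rightarrow> nat" where
  "inter_count X R i j m n = card {l \<in> X. (m, l) \<in> R i \<and> (l, n) \<in> R j}"

definition is_scheme :: "'x set \<Rightarrow> (nat \<Rightarrow> ('x \<times> 'x) set) \<Rightarrow> nat \<Rightarrow> bool" where
  "is_scheme X R d \<longleftrightarrow>
     finite X \<and> X \<noteq> {} \<and>
     (\<forall>i\<le>d. R i \<noteq> {}) \<and>
     (\<forall>i\<le>d. \<forall>j\<le>d. i \<noteq> j \<longrightarrow> R i \<inter> R j = {}) \<and>
     (\<Union>i\<in>{0..d}. R i) = X \<times> X \<and>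
     R 0 = {(b, b) | b. b \<in> X} \<and>
     (\<forall>c\<le>d. \<exists>c'\<le>d. R c' = {(f, e). (e, f) \<in> R c}) \<and>
     (\<forall>i\<le>d. \<forall>j\<le>d. \<forall>k\<le>d. \<forall>m n m' n'. (m, n) \<in> R k \<longrightarrow> (m', n') \<in> R k \<longrightarrow>
        inter_count X R i j m n = inter_count X R i j m' n')"

text \<open>Intersection number p_{ij}^k (evaluated at any pair of R k).\<close>
definition inum :: "'x set \<Rightarrow> (nat \<Rightarrow> ('x \<times> 'x) set) \<Rightarrow> nat \<Rightarrow> nat \<Rightarrow> nat \<Rightarrow> nat" where
  "inum X R i j k = (let (m, n) = (SOME q. q \<in> R k) in inter_count X R i j m n)"

definition conv_idx :: "(nat \<Rightarrow> ('x \<times> 'x) set) \<Rightarrow> nat \<Rightarrow> nat \<Rightarrow> nat" where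
  "conv_idx R d c = (THE c'. c' \<le> d \<and> R c' = {(f, e). (e, f) \<in> R c})"

definition valency :: "'x set \<Rightarrow> (nat \<Rightarrow> ('x \<times> 'x) set) \<Rightarrow> nat \<Rightarrow> nat \<Rightarrow> nat" where
  "valency X R d a = inum X R a (conv_idx R d a) 0"

definition quasi_thin :: "'x set \<Rightarrow> (nat \<Rightarrow> ('x \<times> 'x) set) \<Rightarrow> nat \<Rightarrow> bool" where
  "quasi_thin X R d \<longleftrightarrow> (\<forall>a\<le>d. valency X R d a \<le> 2)"

definition cplx_prod :: "'x set \<Rightarrow> (nat \<Rightarrow> ('x \<times> 'x) set) \<Rightarrow> nat \<Rightarrow> nat \<Rightarrow> nat \<Rightarrow> ('x \<times> 'x) set set" where
  "cplx_prod X R d a b = {R c | c. c \<le> d \<and> inum X R a b c > 0}"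

end

theory Submission
  imports Defs
begin

locale sch =
  fixes X :: "'x set" and R :: "nat \<Rightarrow> ('x \<times> 'x) set" and d :: nat
  assumes S: "is_scheme X R d"
begin

lemma SD1: "finite X"
  using S unfolding is_scheme_def by (elim conjE) assumption

lemma SD2: "X \<noteq> {}"
  using S unfolding is_scheme_def by (elim conjE) assumption

lemma SD3: "\<forall>i\<le>d. R i \<noteq> {}"
  using S unfolding is_scheme_def by (elim conjE) assumption

lemma SD4: "\<forall>i\<le>d. \<forall>j\<le>d. i \<noteq> j \<longrightarrow> R i \<inter> R j = {}"
  using S unfolding is_scheme_def by (elim conjE) assumption

lemma SD5: "(\<Union>i\<in>{0..d}. R i) = X \<times> X"
  using S unfolding is_scheme_def by (elim conjE) assumption

lemma SD6: "R 0 = {(b, b) | b. b \<in> X}"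
  using S unfolding is_scheme_def by (elim conjE) assumption

lemma SD7: "\<forall>c\<le>d. \<exists>c'\<le>d. R c' = {(f, e). (e, f) \<in> R c}"
  using S unfolding is_scheme_def by (elim conjE) assumption

lemma finX: "finite X" and neX: "X \<noteq> {}" and nonempty: "i \<le> d \<Longrightarrow> R i \<noteq> {}"
  using SD1 SD2 SD3 by auto

lemma sub: assumes "i \<le> d" shows "R i \<subseteq> X \<times> X"
proof -
  have "R i \<subseteq> (\<Union>i\<in>{0..d}. R i)" using assms by auto
  then show ?thesis using SD5 by simp
qed

lemma disj: assumes "i \<le> d" "j \<le> d" "p \<in> R i" "p \<in> R j" shows "i = j"
proof (rule ccontr)
  assume "i \<noteq> j"
  then have "R i \<inter> R j = {}" using SD4 assms(1,2) by simp
  then show False using assms(3,4) by auto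
qed

lemma cover: assumes "x \<in> X" "y \<in> X" shows "\<exists>i\<le>d. (x, y) \<in> R i"
proof -
  have "(x,y) \<in> X \<times> X" using assms by simp
  then have "(x,y) \<in> (\<Union>i\<in>{0..d}. R i)" by (simp only: SD5)
  then show ?thesis by auto
qed

lemma R0: "R 0 = {(b, b) | b. b \<in> X}"
  using SD6 .

lemma SD8: "\<forall>i\<le>d. \<forall>j\<le>d. \<forall>k\<le>d. \<forall>m n m' n'. (m, n) \<in> R k \<longrightarrow> (m', n') \<in> R k \<longrightarrow>
        inter_count X R i j m n = inter_count X R i j m' n'"
    using S unfolding is_scheme_def by (elim conjE) assumption

lemma reg: assumes "i \<le> d" "j \<le> d" "k \<le> d" "(m, n) \<in> R k" "(m', n') \<in> R k"
  shows "inter_count X R i j m n = inter_count X R i j m' n'"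
  using SD8 assms by blast

lemma conv: assumes "c \<le> d"
  shows "conv_idx R d c \<le> d \<and> R (conv_idx R d c) = {(f, e). (e, f) \<in> R c}"
proof -
  obtain c' where c': "c' \<le> d" "R c' = {(f, e). (e, f) \<in> R c}"
    using SD7[rule_format, OF assms] by blast
  have u: "c2 = c'" if "c2 \<le> d" "R c2 = {(f, e). (e, f) \<in> R c}" for c2
  proof -
    from nonempty[OF c'(1)] obtain p where p: "p \<in> R c'" by blast
    then have "p \<in> R c2" using that c' by simp
    from disj[OF that(1) c'(1) this p] show ?thesis .
  qed
  have "\<exists>!c'. c' \<le> d \<and> R c' = {(f, e). (e, f) \<in> R c}"
  proof (rule ex1I[of _ c'])
    show "c' \<le> d \<and> R c' = {(f, e). (e, f) \<in> R c}" using c' by (rule conjI)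
    fix y assume "y \<le> d \<and> R y = {(f, e). (e, f) \<in> R c}"
    then show "y = c'" using u by (elim conjE)
  qed
  then show ?thesis unfolding conv_idx_def by (rule theI')
qed

lemma conv_le: "c \<le> d \<Longrightarrow> conv_idx R d c \<le> d" using conv by blast

lemma conv_mem: "c \<le> d \<Longrightarrow> (a, b) \<in> R (conv_idx R d c) \<longleftrightarrow> (b, a) \<in> R c"
  using conv by blast

lemma conv_conv: assumes "c \<le> d" shows "conv_idx R d (conv_idx R d c) = c"
proof -
  let ?c = "conv_idx R d c"
  have "?c \<le> d" using conv_le assms .
  have "R c = {(f, e). (e, f) \<in> R ?c}" using conv_mem[OF assms] by auto
  moreover have "conv_idx R d ?c \<le> d" "R (conv_idx R d ?c) = {(f, e). (e, f) \<in> R ?c}"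
    using conv[OF \<open>?c \<le> d\<close>] by auto
  ultimately have "R (conv_idx R d ?c) = R c" by simp
  moreover obtain p where p: "p \<in> R c" using nonempty assms by blast
  ultimately have "p \<in> R (conv_idx R d ?c)" by simp
  from disj[OF \<open>conv_idx R d ?c \<le> d\<close> assms this p] show ?thesis .
qed

lemma inum_eq: assumes "i \<le> d" "j \<le> d" "k \<le> d" "(m, n) \<in> R k"
  shows "inum X R i j k = inter_count X R i j m n"
proof -
  have "(SOME q. q \<in> R k) \<in> R k" using assms(4) by (rule someI)
  then obtain m' n' where e: "(SOME q. q \<in> R k) = (m', n')" "(m', n') \<in> R k"
    by (metis surj_pair)
  show ?thesis unfolding inum_def e(1) using reg[OF assms(1-3) e(2) assms(4)] by simp
qed

definition nb :: "'x \<Rightarrow> nat \<Rightarrow> 'x set" where "nb x a = {y \<in> X. (x, y) \<in> R a}"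

lemma fin_nb: "finite (nb x a)" unfolding nb_def using finX by simp

lemma card_nb: assumes "a \<le> d" "x \<in> X" shows "card (nb x a) = valency X R d a"
proof -
  have "(x, x) \<in> R 0" using R0 assms by auto
  then have "valency X R d a = inter_count X R a (conv_idx R d a) x x"
    unfolding valency_def using inum_eq[OF assms(1) conv_le[OF assms(1)] le0 \<open>(x, x) \<in> R 0\<close>] by simp
  also have "\<dots> = card (nb x a)" unfolding inter_count_def nb_def
    using conv_mem[OF assms(1)] by simp
  finally show ?thesis by simp
qed

lemma nb_ne: assumes "a \<le> d" "x \<in> X" shows "nb x a \<noteq> {}"
proof -
  obtain m n where mn: "(m, n) \<in> R a" using nonempty[OF assms(1)] by auto
  then have "m \<in> X" "n \<in> X" using sub assms by auto
  then have "n \<in> nb m a" using mn unfolding nb_def by auto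
  then have "card (nb m a) \<noteq> 0" using fin_nb by auto
  then have "card (nb x a) \<noteq> 0" using card_nb assms \<open>m \<in> X\<close> by simp
  then show ?thesis by auto
qed

lemma inum_pos_iff: assumes "u \<le> d" "v \<le> d" "w \<le> d" "(x, z) \<in> R w"
  shows "inum X R u v w \<noteq> 0 \<longleftrightarrow> (\<exists>y. (x, y) \<in> R u \<and> (y, z) \<in> R v)"
proof -
  have "inum X R u v w = card {l \<in> X. (x, l) \<in> R u \<and> (l, z) \<in> R v}"
    using inum_eq assms unfolding inter_count_def by simp
  moreover have "finite {l \<in> X. (x, l) \<in> R u \<and> (l, z) \<in> R v}" using finX by simp
  moreover have "(x, y) \<in> R u \<Longrightarrow> y \<in> X" for y using sub assms by auto
  ultimately show ?thesis by auto
qed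

lemma thin_path:
  assumes uvw: "u \<le> d" "v \<le> d" "w \<le> d" and x: "x \<in> X" and vw: "valency X R d w = 1"
    and nz: "inum X R u v w \<noteq> 0" and z: "z \<in> nb x w" and y: "y \<in> nb x u"
  shows "(y, z) \<in> R v"
proof -
  have c1: "card (nb x w) = 1" using card_nb[OF uvw(3) x] vw by simp
  then obtain z0 where "nb x w = {z0}" using card_1_singletonE by blast
  then have nbw: "nb x w = {z}" using z by simp
  have xz: "(x, z) \<in> R w" using z unfolding nb_def by simp
  obtain y0 where y0: "(x, y0) \<in> R u" "(y0, z) \<in> R v" using inum_pos_iff[OF uvw xz] nz by blast
  let ?v = "conv_idx R d v"
  have v': "?v \<le> d" using conv_le uvw(2) .
  have zX: "z \<in> X" using z unfolding nb_def by simp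
  have "z \<in> {l \<in> X. (x, l) \<in> R w \<and> (l, y0) \<in> R ?v}"
    using zX xz y0(2) conv_mem[OF uvw(2)] by simp
  moreover have "finite {l \<in> X. (x, l) \<in> R w \<and> (l, y0) \<in> R ?v}" using finX by simp
  ultimately have "inter_count X R w ?v x y0 \<noteq> 0" unfolding inter_count_def by auto
  moreover have xy: "(x, y) \<in> R u" using y unfolding nb_def by simp
  ultimately have "inter_count X R w ?v x y \<noteq> 0" using reg[OF uvw(3) v' uvw(1) y0(1) xy] by simp
  then obtain l where l: "l \<in> X" "(x, l) \<in> R w" "(l, y) \<in> R ?v"
    unfolding inter_count_def by (metis (no_types, lifting) card.empty empty_Collect_eq)
  then have "l \<in> nb x w" unfolding nb_def by simp
  then have "l = z" using nbw by simp
  then show ?thesis using l(3) conv_mem[OF uvw(2)] by simp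
qed

lemma W_card:
  assumes qt: "quasi_thin X R d" and uv: "u \<le> d" "v \<le> d"
  shows "card {w. w \<le> d \<and> inum X R u v w \<noteq> 0} \<in> {1, 2}"
proof -
  define W where "W = {w. w \<le> d \<and> inum X R u v w \<noteq> 0}"
  have finW: "finite W" unfolding W_def by simp
  have val: "valency X R d a \<le> 2" if "a \<le> d" for a using qt that unfolding quasi_thin_def by blast
  obtain x where x: "x \<in> X" using neX by blast
  have nbu_ne: "nb x u \<noteq> {}" using nb_ne uv x by simp
  have nbu_le: "card (nb x u) \<le> 2" using card_nb[OF uv(1) x] val uv by simp
  obtain y1 y2 where y12: "y1 \<in> nb x u" "y2 \<in> nb x u" "nb x u \<subseteq> {y1, y2}"
  proof (cases "card (nb x u) = 1")
    case True
    then obtain a where "nb x u = {a}" using card_1_singletonE by blast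
    then show ?thesis using that[of a a] by simp
  next
    case False
    have "card (nb x u) \<noteq> 0" using nbu_ne fin_nb by simp
    then have "card (nb x u) = 2" using nbu_le False by linarith
    then obtain a b where "nb x u = {a, b}" unfolding card_2_iff by blast
    then show ?thesis using that[of a b] by simp
  qed
  have y1X: "y1 \<in> X" and y2X: "y2 \<in> X" using y12 unfolding nb_def by auto
  define Z where "Z = nb y1 v \<union> nb y2 v"
  define I where "I = nb y1 v \<inter> nb y2 v"
  have "card Z + card I = card (nb y1 v) + card (nb y2 v)"
    unfolding Z_def I_def using card_Un_Int[OF fin_nb fin_nb] by simp
  also have "\<dots> \<le> 4" using card_nb[OF uv(2) y1X] card_nb[OF uv(2) y2X] val[OF uv(2)] by simp
  finally have ZI: "card Z + card I \<le> 4" .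
  have finZ: "finite Z" "finite I" unfolding Z_def I_def using fin_nb by auto
  have Wd: "w \<le> d" if "w \<in> W" for w using that unfolding W_def by simp
  have nbZ: "nb x w \<subseteq> Z" if wW: "w \<in> W" for w
  proof
    fix z assume z: "z \<in> nb x w"
    then have xz: "(x, z) \<in> R w" unfolding nb_def by simp
    obtain y where y: "(x, y) \<in> R u" "(y, z) \<in> R v"
      using inum_pos_iff[OF uv Wd[OF wW] xz] wW unfolding W_def by blast
    have "y \<in> nb x u" using y(1) sub[OF uv(1)] unfolding nb_def by auto
    then have "y = y1 \<or> y = y2" using y12 by auto
    moreover have "z \<in> X" using z unfolding nb_def by simp
    ultimately show "z \<in> Z" using y(2) unfolding Z_def nb_def by auto
  qed
  define W1 where "W1 = {w \<in> W. valency X R d w = 1}"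
  have nbI: "nb x w \<subseteq> I" if wW1: "w \<in> W1" for w
  proof
    fix z assume z: "z \<in> nb x w"
    have wW: "w \<in> W" "valency X R d w = 1" using wW1 unfolding W1_def by auto
    have nz: "inum X R u v w \<noteq> 0" using wW unfolding W_def by simp
    have "(y1, z) \<in> R v" "(y2, z) \<in> R v"
      using thin_path[OF uv Wd[OF wW(1)] x wW(2) nz z] y12 by auto
    moreover have "z \<in> X" using z unfolding nb_def by simp
    ultimately show "z \<in> I" unfolding I_def nb_def by auto
  qed
  have disjnb: "nb x a \<inter> nb x b = {}" if "a \<in> W" "b \<in> W" "a \<noteq> b" for a b
    using disj[OF Wd[OF that(1)] Wd[OF that(2)]] that(3) unfolding nb_def by blast
  have fW1: "finite W1" "W1 \<subseteq> W" using finW unfolding W1_def by auto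
  have cA: "card (\<Union>w\<in>W. nb x w) = (\<Sum>w\<in>W. card (nb x w))"
    by (rule card_UN_disjoint[OF finW]) (use fin_nb disjnb in auto)
  have cT: "card (\<Union>w\<in>W1. nb x w) = (\<Sum>w\<in>W1. card (nb x w))"
  proof (rule card_UN_disjoint[OF fW1(1)])
    show "\<forall>i\<in>W1. finite (nb x i)" using fin_nb by simp
    show "\<forall>i\<in>W1. \<forall>j\<in>W1. i \<noteq> j \<longrightarrow> nb x i \<inter> nb x j = {}"
      using disjnb fW1(2) by blast
  qed
  have A1: "card (\<Union>w\<in>W. nb x w) \<le> card Z" using nbZ finZ by (intro card_mono) auto
  have A2: "card (\<Union>w\<in>W1. nb x w) \<le> card I" using nbI finZ by (intro card_mono) auto
  have s1: "(\<Sum>w\<in>W1. card (nb x w)) = (\<Sum>w\<in>W1. 1)"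
  proof (rule sum.cong)
    fix w assume "w \<in> W1"
    then show "card (nb x w) = 1" using card_nb[OF Wd x, of w] unfolding W1_def by simp
  qed simp
  have s2: "(\<Sum>w\<in>W. card (nb x w)) = (\<Sum>w\<in>W1. card (nb x w)) + (\<Sum>w\<in>W-W1. card (nb x w))"
    using sum.subset_diff[OF fW1(2) finW, of "\<lambda>w. card (nb x w)"] by simp
  have s3: "(\<Sum>w\<in>W-W1. card (nb x w)) = (\<Sum>w\<in>W-W1. 2)"
  proof (rule sum.cong)
    fix w assume "w \<in> W - W1"
    then have wW: "w \<in> W" and "valency X R d w \<noteq> 1" unfolding W1_def by auto
    moreover have "card (nb x w) \<noteq> 0" using nb_ne[OF Wd[OF wW] x] fin_nb by auto
    moreover have "card (nb x w) = valency X R d w" using card_nb[OF Wd[OF wW] x] .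
    moreover have "valency X R d w \<le> 2" using val[OF Wd[OF wW]] .
    ultimately show "card (nb x w) = 2" by linarith
  qed simp
  have s4: "card W = card W1 + card (W - W1)"
    using card_Diff_subset[OF fW1(1) fW1(2)] card_mono[OF finW fW1(2)] by simp
  have "2 * card W = card (\<Union>w\<in>W. nb x w) + card (\<Union>w\<in>W1. nb x w)"
    using cA cT s1 s2 s3 s4 by simp
  then have up: "card W \<le> 2" using A1 A2 ZI by linarith
  obtain z where z: "z \<in> nb y1 v" using nb_ne[OF uv(2) y1X] by blast
  then have zX: "z \<in> X" unfolding nb_def by simp
  obtain w where w: "w \<le> d" "(x, z) \<in> R w" using cover[OF x zX] by blast
  have "inum X R u v w \<noteq> 0" using inum_pos_iff[OF uv w(1) w(2)] y12(1) z unfolding nb_def by blast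
  then have "w \<in> W" unfolding W_def using w by simp
  then have "card W \<noteq> 0" using finW by auto
  then have "card W \<in> {1, 2}" using up by auto
  then show ?thesis unfolding W_def .
qed

lemma R_inj: "inj_on R {..d}"
proof (rule inj_onI)
  fix i j assume ij: "i \<in> {..d}" "j \<in> {..d}" "R i = R j"
  obtain p where p: "p \<in> R i" using nonempty ij(1) by blast
  then have "p \<in> R j" using ij(3) by simp
  from disj[OF _ _ p this] ij(1,2) show "i = j" by simp
qed

lemma card_cplx: assumes "a \<le> d" "b \<le> d"
  shows "card (cplx_prod X R d a b) = card {w. w \<le> d \<and> inum X R a b w \<noteq> 0}"
proof -
  have e: "cplx_prod X R d a b = R ` {w. w \<le> d \<and> inum X R a b w \<noteq> 0}"
    unfolding cplx_prod_def by auto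
  have "inj_on R {w. w \<le> d \<and> inum X R a b w \<noteq> 0}"
    by (rule inj_on_subset[OF R_inj]) auto
  then show ?thesis unfolding e by (rule card_image)
qed

lemma sum_12: assumes "\<And>v. v \<in> A \<Longrightarrow> f v \<in> {1, 2::nat}" and "finite A"
  shows "(\<Sum>v\<in>A. f v) = card A + card {v \<in> A. f v = 2}"
proof -
  have "(\<Sum>v\<in>A. f v) = (\<Sum>v\<in>A. 1 + (if f v = 2 then 1 else 0))"
    by (rule sum.cong) (use assms(1) in auto)
  also have "\<dots> = card A + (\<Sum>v\<in>A. if f v = 2 then 1 else 0)"
    unfolding sum.distrib by simp
  also have "(\<Sum>v\<in>A. if f v = 2 then 1 else (0::nat)) = card {v \<in> A. f v = 2}"
    using sum.inter_filter[OF assms(2), of "\<lambda>_. 1::nat" "\<lambda>v. f v = 2"] by simp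
  finally show ?thesis .
qed

lemma main:
  assumes qt: "quasi_thin X R d"
  shows "card {(u, v, w). u \<le> d \<and> v \<le> d \<and> w \<le> d \<and> inum X R u v w \<noteq> 0}
         = (d + 1)^2 + card {(a, b). a \<le> d \<and> b \<le> d \<and> card (cplx_prod X R d (conv_idx R d a) b) = 2}"
proof -
  define c where "c u v = card {w. w \<le> d \<and> inum X R u v w \<noteq> 0}" for u v
  have c12: "c u v \<in> {1, 2}" if "u \<le> d" "v \<le> d" for u v
    unfolding c_def using W_card[OF qt that] .
  have e1: "{(u, v, w). u \<le> d \<and> v \<le> d \<and> w \<le> d \<and> inum X R u v w \<noteq> 0}
     = Sigma {..d} (\<lambda>u. Sigma {..d} (\<lambda>v. {w. w \<le> d \<and> inum X R u v w \<noteq> 0}))" by auto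
  have "card {(u, v, w). u \<le> d \<and> v \<le> d \<and> w \<le> d \<and> inum X R u v w \<noteq> 0}
     = (\<Sum>u\<le>d. \<Sum>v\<le>d. c u v)" unfolding e1 c_def
    by (simp add: card_SigmaI)
  also have "\<dots> = (\<Sum>u\<le>d. (d + 1) + card {v \<in> {..d}. c u v = 2})"
    by (rule sum.cong) (use sum_12[of "{..d}" "c _"] c12 in auto)
  also have "\<dots> = (d + 1)^2 + (\<Sum>u\<le>d. card {v \<in> {..d}. c u v = 2})"
    unfolding sum.distrib by (simp add: power2_eq_square)
  finally have L: "card {(u, v, w). u \<le> d \<and> v \<le> d \<and> w \<le> d \<and> inum X R u v w \<noteq> 0}
     = (d + 1)^2 + (\<Sum>u\<le>d. card {v \<in> {..d}. c u v = 2})" .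
  have e2: "{(a, b). a \<le> d \<and> b \<le> d \<and> card (cplx_prod X R d (conv_idx R d a) b) = 2}
     = Sigma {..d} (\<lambda>a. {v \<in> {..d}. c (conv_idx R d a) v = 2})"
    unfolding c_def using card_cplx conv_le by auto
  have "card {(a, b). a \<le> d \<and> b \<le> d \<and> card (cplx_prod X R d (conv_idx R d a) b) = 2}
     = (\<Sum>a\<le>d. card {v \<in> {..d}. c (conv_idx R d a) v = 2})" unfolding e2
    by (simp add: card_SigmaI)
  also have "\<dots> = (\<Sum>u\<le>d. card {v \<in> {..d}. c u v = 2})"
  proof (rule sum.reindex_bij_betw)
    show "bij_betw (conv_idx R d) {..d} {..d}"
    proof (rule bij_betw_byWitness[where f' = "conv_idx R d"])
      show "\<forall>a\<in>{..d}. conv_idx R d (conv_idx R d a) = a" using conv_conv by simp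
      show "\<forall>a'\<in>{..d}. conv_idx R d (conv_idx R d a') = a'" using conv_conv by simp
      show "conv_idx R d ` {..d} \<subseteq> {..d}" using conv_le by auto
      show "conv_idx R d ` {..d} \<subseteq> {..d}" using conv_le by auto
    qed
  qed
  finally show ?thesis using L by simp
qed

end

theorem lemma2p2:
  fixes X :: "'x set" and R :: "nat \<Rightarrow> ('x \<times> 'x) set" and d :: nat
  assumes "is_scheme X R d" and "quasi_thin X R d"
  shows "card {(u, v, w). u \<le> d \<and> v \<le> d \<and> w \<le> d \<and> inum X R u v w \<noteq> 0}
         = (d + 1)^2 + card {(a, b). a \<le> d \<and> b \<le> d \<and> card (cplx_prod X R d (conv_idx R d a) b) = 2}"
proof -
  interpret sch X R d by unfold_locales (rule assms(1))
  show ?thesis using main[OF assms(2)] .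
qed

end
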